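(* Let $R$ be a Hilbert ring, i.e. a ring in which every prime ideal is an intersection of maximal ideals. Then $R$ is feckly clean if and only if $\operatorname{Max}(R)$ is strongly zero-dimensional.
   Context: Rings are associative with identity, not necessarily commutative; ideals are two-sided; $J(R)$ is the Jacobson radical. An element $u\in R$ is full if $RuR=R$. An element $a\in R$ is feckly clean if there exist $e\in R$ and a full element $u\in R$ with $a=e+u$ and $eR(1-e)\subseteq J(R)$; $R$ is feckly clean if every element is feckly clean. $\operatorname{Max}(R)$ is the set of all maximal ideals of $R$, topologized so that the closed sets are exactly the sets $V(I)=\{P\in\operatorname{Max}(R): I\subseteq P\}$ for ideals $I$. A topological space $X$ is strongly zero-dimensional if for any two disjoint closed sets $A,B\subseteq X$ there exist disjoint clopen sets $C_1,C_2$ with $A\subseteq C_1$ and $B\subseteq C_2$. *)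

theory Defs
  imports "HOL-Analysis.Analysis"
begin

definition two_sided_ideal :: "'a::ring_1 set \<Rightarrow> bool" where
  "two_sided_ideal I \<longleftrightarrow> 0 \<in> I \<and> (\<forall>a\<in>I. \<forall>b\<in>I. a + b \<in> I) \<and> (\<forall>a\<in>I. - a \<in> I)
     \<and> (\<forall>r a. a \<in> I \<longrightarrow> r * a \<in> I \<and> a * r \<in> I)"

definition left_ideal :: "'a::ring_1 set \<Rightarrow> bool" where
  "left_ideal I \<longleftrightarrow> 0 \<in> I \<and> (\<forall>a\<in>I. \<forall>b\<in>I. a + b \<in> I) \<and> (\<forall>a\<in>I. - a \<in> I)
     \<and> (\<forall>r a. a \<in> I \<longrightarrow> r * a \<in> I)"

definition maximal_ideal :: "'a::ring_1 set \<Rightarrow> bool" where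
  "maximal_ideal M \<longleftrightarrow> two_sided_ideal M \<and> M \<noteq> UNIV \<and>
     (\<forall>I. two_sided_ideal I \<and> M \<subseteq> I \<longrightarrow> I = M \<or> I = UNIV)"

definition maximal_left_ideal :: "'a::ring_1 set \<Rightarrow> bool" where
  "maximal_left_ideal M \<longleftrightarrow> left_ideal M \<and> M \<noteq> UNIV \<and>
     (\<forall>I. left_ideal I \<and> M \<subseteq> I \<longrightarrow> I = M \<or> I = UNIV)"

definition prime_ideal :: "'a::ring_1 set \<Rightarrow> bool" where
  "prime_ideal P \<longleftrightarrow> two_sided_ideal P \<and> P \<noteq> UNIV \<and>
     (\<forall>A B. two_sided_ideal A \<and> two_sided_ideal B \<and> (\<forall>a\<in>A. \<forall>b\<in>B. a * b \<in> P)
        \<longrightarrow> A \<subseteq> P \<or> B \<subseteq> P)"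

definition jacobson :: "'a::ring_1 set" where
  "jacobson = \<Inter>{M. maximal_left_ideal M}"

text \<open>Two-sided ideal generated by a set (so R u R is ideal_gen {u}).\<close>
definition ideal_gen :: "'a::ring_1 set \<Rightarrow> 'a set" where
  "ideal_gen S = \<Inter>{I. two_sided_ideal I \<and> S \<subseteq> I}"

definition full :: "'a::ring_1 \<Rightarrow> bool" where
  "full u \<longleftrightarrow> ideal_gen {u} = UNIV"

definition feckly_clean_elem :: "'a::ring_1 \<Rightarrow> bool" where
  "feckly_clean_elem a \<longleftrightarrow> (\<exists>e u. a = e + u \<and> full u \<and> (\<forall>r. e * r * (1 - e) \<in> jacobson))"

definition feckly_clean :: "'a::ring_1 itself \<Rightarrow> bool" where
  "feckly_clean _ \<longleftrightarrow> (\<forall>a::'a. feckly_clean_elem a)"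

definition hilbert_ring :: "'a::ring_1 itself \<Rightarrow> bool" where
  "hilbert_ring _ \<longleftrightarrow> (\<forall>P::'a set. prime_ideal P \<longrightarrow>
      (\<exists>\<M>. (\<forall>M\<in>\<M>. maximal_ideal M) \<and> P = \<Inter>\<M>))"

definition MaxSpec :: "'a::ring_1 set set" where
  "MaxSpec = {M. maximal_ideal M}"

definition V :: "'a::ring_1 set \<Rightarrow> 'a set set" where
  "V I = {P \<in> MaxSpec. I \<subseteq> P}"

definition max_topology :: "'a::ring_1 itself \<Rightarrow> 'a set topology" where
  "max_topology _ = topology (\<lambda>U. \<exists>I. two_sided_ideal I \<and> U = MaxSpec - V I)"

definition strongly_zero_dimensional :: "'b topology \<Rightarrow> bool" where
  "strongly_zero_dimensional X \<longleftrightarrow>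
     (\<forall>A B. closedin X A \<and> closedin X B \<and> A \<inter> B = {} \<longrightarrow>
        (\<exists>C1 C2. closedin X C1 \<and> openin X C1 \<and> closedin X C2 \<and> openin X C2 \<and>
                 C1 \<inter> C2 = {} \<and> A \<subseteq> C1 \<and> B \<subseteq> C2))"

end

theory Submission
  imports Defs
begin

lemma ts_UNIV: "two_sided_ideal (UNIV::'a::ring_1 set)"
  by (simp add: two_sided_ideal_def)

lemma ts_one: "two_sided_ideal (I::'a::ring_1 set) \<Longrightarrow> 1 \<in> I \<Longrightarrow> I = UNIV"
  unfolding two_sided_ideal_def by (metis UNIV_eq_I mult.right_neutral)

lemma ts_noneq: "two_sided_ideal (I::'a::ring_1 set) \<Longrightarrow> I \<noteq> UNIV \<longleftrightarrow> 1 \<notin> I"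
  using ts_one by blast

lemma ts_diff: "two_sided_ideal (I::'a::ring_1 set) \<Longrightarrow> a \<in> I \<Longrightarrow> b \<in> I \<Longrightarrow> a - b \<in> I"
  unfolding two_sided_ideal_def by (metis diff_conv_add_uminus)

lemma ts_ideal_gen: "two_sided_ideal (ideal_gen (S::'a::ring_1 set))"
  unfolding ideal_gen_def two_sided_ideal_def by blast

lemma ideal_gen_sub: "S \<subseteq> ideal_gen (S::'a::ring_1 set)"
  unfolding ideal_gen_def by blast

lemma ideal_gen_le: "two_sided_ideal (I::'a::ring_1 set) \<Longrightarrow> S \<subseteq> I \<Longrightarrow> ideal_gen S \<subseteq> I"
  unfolding ideal_gen_def by blast

lemma ideal_gen_le_iff: "two_sided_ideal (I::'a::ring_1 set) \<Longrightarrow> ideal_gen S \<subseteq> I \<longleftrightarrow> S \<subseteq> I"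
  using ideal_gen_le ideal_gen_sub by blast

lemma max_ts: "maximal_ideal M \<Longrightarrow> two_sided_ideal M"
  by (simp add: maximal_ideal_def)

lemma max_one: "maximal_ideal (M::'a::ring_1 set) \<Longrightarrow> 1 \<notin> M"
  using ts_one maximal_ideal_def by blast

lemma tsD:
  assumes "two_sided_ideal I"
  shows "0 \<in> I" "a \<in> I \<Longrightarrow> b \<in> I \<Longrightarrow> a + b \<in> I" "a \<in> I \<Longrightarrow> - a \<in> I"
        "a \<in> I \<Longrightarrow> r * a \<in> I" "a \<in> I \<Longrightarrow> a * r \<in> I"
  using assms unfolding two_sided_ideal_def by auto

lemma tsI:
  assumes "0 \<in> I" "\<And>a b. a \<in> I \<Longrightarrow> b \<in> I \<Longrightarrow> a + b \<in> I" "\<And>a. a \<in> I \<Longrightarrow> - a \<in> I"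
        "\<And>a r. a \<in> I \<Longrightarrow> r * a \<in> I" "\<And>a r. a \<in> I \<Longrightarrow> a * r \<in> I"
  shows "two_sided_ideal (I::'a::ring_1 set)"
  using assms unfolding two_sided_ideal_def by auto

lemma max_prime:
  fixes M :: "'a::ring_1 set"
  assumes M: "maximal_ideal M" and a: "a \<notin> M" and b: "\<forall>r. a*r*b \<in> M"
  shows "b \<in> M"
proof -
  let ?A = "{x. \<forall>r. x*r*b \<in> M}"
  have tM: "two_sided_ideal M" using M by (simp add: maximal_ideal_def)
  have "two_sided_ideal ?A"
  proof (rule tsI)
    show "0 \<in> ?A" using tsD(1)[OF tM] by simp
  next
    fix x y assume "x \<in> ?A" "y \<in> ?A"
    then show "x + y \<in> ?A" using tsD(2)[OF tM] by (simp add: distrib_right)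
  next
    fix x assume "x \<in> ?A"
    then show "- x \<in> ?A" using tsD(3)[OF tM] by simp
  next
    fix r x assume "x \<in> ?A"
    then show "r * x \<in> ?A" using tsD(4)[OF tM] by (simp add: mult.assoc)
  next
    fix r x assume x: "x \<in> ?A"
    show "x * r \<in> ?A"
    proof (intro CollectI allI)
      fix s have "x * (r * s) * b \<in> M" using x by blast
      then show "x * r * s * b \<in> M" by (simp add: mult.assoc)
    qed
  qed
  moreover have "M \<subseteq> ?A" using tsD(5)[OF tM] by blast
  ultimately have "?A = M \<or> ?A = UNIV" using M by (simp add: maximal_ideal_def)
  moreover have "a \<in> ?A" using b by simp
  ultimately have "?A = UNIV" using a by blast
  then have "1 \<in> ?A" by (metis UNIV_I)
  then have "1 * 1 * b \<in> M" by blast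
  then show ?thesis by simp
qed
lemma liD:
  assumes "left_ideal I"
  shows "0 \<in> I" "a \<in> I \<Longrightarrow> b \<in> I \<Longrightarrow> a + b \<in> I" "a \<in> I \<Longrightarrow> - a \<in> I"
        "a \<in> I \<Longrightarrow> r * a \<in> I"
  using assms unfolding left_ideal_def by auto

lemma liI:
  assumes "0 \<in> I" "\<And>a b. a \<in> I \<Longrightarrow> b \<in> I \<Longrightarrow> a + b \<in> I" "\<And>a. a \<in> I \<Longrightarrow> - a \<in> I"
        "\<And>a r. a \<in> I \<Longrightarrow> r * a \<in> I"
  shows "left_ideal (I::'a::ring_1 set)"
  using assms unfolding left_ideal_def by auto

lemma li_one: "left_ideal (I::'a::ring_1 set) \<Longrightarrow> 1 \<in> I \<Longrightarrow> I = UNIV"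
  using liD(4) by (metis UNIV_eq_I mult.right_neutral)

lemma union_chain_closed:
  assumes C: "C \<noteq> {}" and ch: "\<forall>X\<in>C. \<forall>Y\<in>C. X \<subseteq> Y \<or> Y \<subseteq> X"
    and P: "\<And>X. X \<in> C \<Longrightarrow> (\<forall>a\<in>X. \<forall>b\<in>X. a + b \<in> X)"
    and a: "a \<in> \<Union>C" and b: "b \<in> \<Union>C"
  shows "a + b \<in> \<Union>C"
proof -
  obtain X Y where XY: "X \<in> C" "Y \<in> C" "a \<in> X" "b \<in> Y" using a b by blast
  show ?thesis
  proof (cases "X \<subseteq> Y")
    case True then show ?thesis using XY P[of Y] by blast
  next
    case False then have "Y \<subseteq> X" using ch XY by blast
    then show ?thesis using XY P[of X] by blast
  qed
qed

lemma exists_maximal: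
  fixes I :: "'a::ring_1 set"
  assumes I: "two_sided_ideal I" and one: "1 \<notin> I"
  shows "\<exists>M. maximal_ideal M \<and> I \<subseteq> M"
proof -
  let ?F = "{J. two_sided_ideal J \<and> I \<subseteq> J \<and> 1 \<notin> J}"
  have "\<exists>M\<in>?F. \<forall>X\<in>?F. M \<subseteq> X \<longrightarrow> X = M"
  proof (rule subset_Zorn_nonempty)
    show "?F \<noteq> {}" using I one by blast
  next
    fix C assume C: "C \<noteq> {}" "subset.chain ?F C"
    have sub: "\<And>X. X \<in> C \<Longrightarrow> two_sided_ideal X \<and> I \<subseteq> X \<and> 1 \<notin> X"
      and ch: "\<forall>X\<in>C. \<forall>Y\<in>C. X \<subseteq> Y \<or> Y \<subseteq> X"
      using C(2) by (auto simp: subset_chain_def)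
    have "two_sided_ideal (\<Union>C)"
    proof (rule tsI)
      show "0 \<in> \<Union>C" using C(1) sub tsD(1) by blast
    next
      fix a b assume "a \<in> \<Union>C" "b \<in> \<Union>C"
      then show "a + b \<in> \<Union>C" using union_chain_closed[OF C(1) ch] sub tsD(2) by metis
    next
      fix a assume "a \<in> \<Union>C" then show "- a \<in> \<Union>C" using sub tsD(3) by blast
    next
      fix r a assume "a \<in> \<Union>C" then show "r * a \<in> \<Union>C" using sub tsD(4) by blast
    next
      fix r a assume "a \<in> \<Union>C" then show "a * r \<in> \<Union>C" using sub tsD(5) by blast
    qed
    moreover have "I \<subseteq> \<Union>C" using C(1) sub by blast
    moreover have "1 \<notin> \<Union>C" using sub by blast
    ultimately show "\<Union>C \<in> ?F" by blast
  qed
  then obtain M where M: "M \<in> ?F" and mx: "\<forall>X\<in>?F. M \<subseteq> X \<longrightarrow> X = M" by blast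
  have "maximal_ideal M"
    unfolding maximal_ideal_def
  proof (intro conjI allI impI)
    show "two_sided_ideal M" using M by simp
    show "M \<noteq> UNIV" using M by auto
    fix J assume J: "two_sided_ideal J \<and> M \<subseteq> J"
    show "J = M \<or> J = UNIV"
    proof (cases "1 \<in> J")
      case True then show ?thesis using ts_one J by blast
    next
      case False then have "J \<in> ?F" using J M by auto
      then show ?thesis using J mx by blast
    qed
  qed
  then show ?thesis using M by blast
qed

lemma exists_max_left:
  fixes I :: "'a::ring_1 set"
  assumes I: "left_ideal I" and one: "1 \<notin> I"
  shows "\<exists>M. maximal_left_ideal M \<and> I \<subseteq> M"
proof -
  let ?F = "{J. left_ideal J \<and> I \<subseteq> J \<and> 1 \<notin> J}"
  have "\<exists>M\<in>?F. \<forall>X\<in>?F. M \<subseteq> X \<longrightarrow> X = M"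
  proof (rule subset_Zorn_nonempty)
    show "?F \<noteq> {}" using I one by blast
  next
    fix C assume C: "C \<noteq> {}" "subset.chain ?F C"
    have sub: "\<And>X. X \<in> C \<Longrightarrow> left_ideal X \<and> I \<subseteq> X \<and> 1 \<notin> X"
      and ch: "\<forall>X\<in>C. \<forall>Y\<in>C. X \<subseteq> Y \<or> Y \<subseteq> X"
      using C(2) by (auto simp: subset_chain_def)
    have "left_ideal (\<Union>C)"
    proof (rule liI)
      show "0 \<in> \<Union>C" using C(1) sub liD(1) by blast
    next
      fix a b assume "a \<in> \<Union>C" "b \<in> \<Union>C"
      then show "a + b \<in> \<Union>C" using union_chain_closed[OF C(1) ch] sub liD(2) by metis
    next
      fix a assume "a \<in> \<Union>C" then show "- a \<in> \<Union>C" using sub liD(3) by blast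
    next
      fix r a assume "a \<in> \<Union>C" then show "r * a \<in> \<Union>C" using sub liD(4) by blast
    qed
    moreover have "I \<subseteq> \<Union>C" using C(1) sub by blast
    moreover have "1 \<notin> \<Union>C" using sub by blast
    ultimately show "\<Union>C \<in> ?F" by blast
  qed
  then obtain M where M: "M \<in> ?F" and mx: "\<forall>X\<in>?F. M \<subseteq> X \<longrightarrow> X = M" by blast
  have "maximal_left_ideal M"
    unfolding maximal_left_ideal_def
  proof (intro conjI allI impI)
    show "left_ideal M" using M by simp
    show "M \<noteq> UNIV" using M by auto
    fix J assume J: "left_ideal J \<and> M \<subseteq> J"
    show "J = M \<or> J = UNIV"
    proof (cases "1 \<in> J")
      case True then show ?thesis using li_one J by blast
    next
      case False then have "J \<in> ?F" using J M by auto
      then show ?thesis using J mx by blast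
    qed
  qed
  then show ?thesis using M by blast
qed
lemma mli_D: "maximal_left_ideal L \<Longrightarrow> left_ideal L"
  by (simp add: maximal_left_ideal_def)

lemma mli_one: "maximal_left_ideal (L::'a::ring_1 set) \<Longrightarrow> 1 \<notin> L"
  using li_one maximal_left_ideal_def by blast

lemma mli_gen:
  fixes L :: "'a::ring_1 set"
  assumes L: "maximal_left_ideal L" and y: "y \<notin> L"
  shows "\<exists>l t. l \<in> L \<and> z = l + t * y"
proof -
  let ?I = "{l + t * y | l t. l \<in> L}"
  have lL: "left_ideal L" using L by (simp add: maximal_left_ideal_def)
  have "left_ideal ?I"
  proof (rule liI)
    show "0 \<in> ?I" using liD(1)[OF lL] by (metis (mono_tags, lifting) CollectI add_0 mult_zero_left)
  next
    fix a b assume "a \<in> ?I" "b \<in> ?I"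
    then obtain l1 t1 l2 t2 where "a = l1 + t1 * y" "b = l2 + t2 * y" "l1 \<in> L" "l2 \<in> L" by blast
    then have "a + b = (l1 + l2) + (t1 + t2) * y" "l1 + l2 \<in> L" using liD(2)[OF lL]
      by (auto simp: algebra_simps)
    then show "a + b \<in> ?I" by blast
  next
    fix a assume "a \<in> ?I"
    then obtain l1 t1 where "a = l1 + t1 * y" "l1 \<in> L" by blast
    then have "- a = (- l1) + (- t1) * y" "- l1 \<in> L" using liD(3)[OF lL] by auto
    then show "- a \<in> ?I" by blast
  next
    fix a r assume "a \<in> ?I"
    then obtain l1 t1 where "a = l1 + t1 * y" "l1 \<in> L" by blast
    then have "r * a = (r * l1) + (r * t1) * y" "r * l1 \<in> L" using liD(4)[OF lL]
      by (auto simp: algebra_simps)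
    then show "r * a \<in> ?I" by blast
  qed
  moreover have "L \<subseteq> ?I"
  proof
    fix l assume "l \<in> L" then have "l = l + 0 * y \<and> l \<in> L" by simp
    then show "l \<in> ?I" by blast
  qed
  moreover have "y \<in> ?I" using liD(1)[OF lL] by (metis (mono_tags, lifting) CollectI add_0 mult_1_left)
  ultimately have "?I = UNIV" using L y unfolding maximal_left_ideal_def by blast
  then show ?thesis by blast
qed

lemma colon_max:
  fixes L :: "'a::ring_1 set"
  assumes L: "maximal_left_ideal L" and s: "s \<notin> L"
  shows "maximal_left_ideal {y. y * s \<in> L}"
proof -
  let ?L = "{y. y * s \<in> L}"
  have lL: "left_ideal L" using L by (simp add: maximal_left_ideal_def)
  have li: "left_ideal ?L"
  proof (rule liI)
    show "0 \<in> ?L" using liD(1)[OF lL] by simp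
  next
    fix a b assume "a \<in> ?L" "b \<in> ?L" then show "a + b \<in> ?L" using liD(2)[OF lL] by (simp add: distrib_right)
  next
    fix a assume "a \<in> ?L" then show "- a \<in> ?L" using liD(3)[OF lL] by simp
  next
    fix a r assume "a \<in> ?L" then show "r * a \<in> ?L" using liD(4)[OF lL] by (simp add: mult.assoc)
  qed
  have pr: "?L \<noteq> UNIV"
  proof
    assume "?L = UNIV" then have "1 \<in> ?L" by simp
    then have "1 * s \<in> L" by blast
    then show False using s by simp
  qed
  show ?thesis
    unfolding maximal_left_ideal_def
  proof (intro conjI allI impI li pr)
    fix I assume I: "left_ideal I \<and> ?L \<subseteq> I"
    show "I = ?L \<or> I = UNIV"
    proof (cases "I = ?L")
      case False
      then obtain y where y: "y \<in> I" "y * s \<notin> L" using I by blast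
      have "z \<in> I" for z
      proof -
        obtain l t where lt: "l \<in> L" "z * s = l + t * (y * s)" using mli_gen[OF L y(2)] by blast
        have "(z - t * y) * s = l" using lt(2) by (simp add: algebra_simps)
        then have "z - t * y \<in> I" using lt(1) I by auto
        moreover have "t * y \<in> I" using y(1) I liD(4) by blast
        ultimately have "(z - t * y) + t * y \<in> I" using I liD(2) by blast
        then show ?thesis by simp
      qed
      then show ?thesis by blast
    qed simp
  qed
qed

lemma jacobson_sub_max:
  fixes M :: "'a::ring_1 set"
  assumes M: "maximal_ideal M"
  shows "jacobson \<subseteq> M"
proof
  fix x assume x: "x \<in> (jacobson :: 'a set)"
  have tM: "two_sided_ideal M" using M by (simp add: maximal_ideal_def)
  have "left_ideal M" using tM unfolding left_ideal_def two_sided_ideal_def by blast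
  then obtain L where L: "maximal_left_ideal L" "M \<subseteq> L" using exists_max_left max_one[OF M] by blast
  have lL: "left_ideal L" using L mli_D by blast
  let ?P = "{y. \<forall>s. y * s \<in> L}"
  have tP: "two_sided_ideal ?P"
  proof (rule tsI)
    show "0 \<in> ?P" using liD(1)[OF lL] by simp
  next
    fix a b assume "a \<in> ?P" "b \<in> ?P" then show "a + b \<in> ?P" using liD(2)[OF lL] by (simp add: distrib_right)
  next
    fix a assume "a \<in> ?P" then show "- a \<in> ?P" using liD(3)[OF lL] by simp
  next
    fix a r assume "a \<in> ?P" then show "r * a \<in> ?P" using liD(4)[OF lL] by (simp add: mult.assoc)
  next
    fix a r assume a: "a \<in> ?P" show "a * r \<in> ?P"
    proof (intro CollectI allI)
      fix s have "a * (r * s) \<in> L" using a by blast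
      then show "a * r * s \<in> L" by (simp add: mult.assoc)
    qed
  qed
  have "M \<subseteq> ?P" using L(2) tsD(5)[OF tM] by blast
  moreover have "?P \<noteq> UNIV" proof
    assume "?P = UNIV" then have "1 \<in> ?P" by simp
    then have "1 * 1 \<in> L" by blast
    then show False using mli_one[OF L(1)] by simp
  qed
  ultimately have PM: "?P = M" using M tP unfolding maximal_ideal_def by blast
  have "x * s \<in> L" for s
  proof (cases "s \<in> L")
    case True then show ?thesis using liD(4)[OF lL] by blast
  next
    case False
    then have "maximal_left_ideal {y. y * s \<in> L}" using colon_max L(1) by blast
    then show ?thesis using x unfolding jacobson_def by blast
  qed
  then show "x \<in> M" using PM by blast
qed

lemma core_prime:
  fixes L :: "'a::ring_1 set"
  assumes L: "maximal_left_ideal L"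
  shows "prime_ideal {y. \<forall>s. y * s \<in> L}"
proof -
  have lL: "left_ideal L" using L mli_D by blast
  let ?P = "{y. \<forall>s. y * s \<in> L}"
  have tP: "two_sided_ideal ?P"
  proof (rule tsI)
    show "0 \<in> ?P" using liD(1)[OF lL] by simp
  next
    fix a b assume "a \<in> ?P" "b \<in> ?P" then show "a + b \<in> ?P" using liD(2)[OF lL] by (simp add: distrib_right)
  next
    fix a assume "a \<in> ?P" then show "- a \<in> ?P" using liD(3)[OF lL] by simp
  next
    fix a r assume "a \<in> ?P" then show "r * a \<in> ?P" using liD(4)[OF lL] by (simp add: mult.assoc)
  next
    fix a r assume a: "a \<in> ?P" show "a * r \<in> ?P"
    proof (intro CollectI allI)
      fix s have "a * (r * s) \<in> L" using a by blast
      then show "a * r * s \<in> L" by (simp add: mult.assoc)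
    qed
  qed
  have pr: "?P \<noteq> UNIV" proof
    assume "?P = UNIV" then have "1 \<in> ?P" by simp
    then have "1 * 1 \<in> L" by blast
    then show False using mli_one[OF L] by simp
  qed
  show ?thesis
    unfolding prime_ideal_def
  proof (intro conjI tP pr allI impI)
    fix A B assume AB: "two_sided_ideal A \<and> two_sided_ideal B \<and> (\<forall>a\<in>A. \<forall>b\<in>B. a * b \<in> ?P)"
    show "A \<subseteq> ?P \<or> B \<subseteq> ?P"
    proof (cases "B \<subseteq> ?P")
      case False
      then obtain b r where b: "b \<in> B" "b * r \<notin> L" by blast
      have "a \<in> ?P" if a: "a \<in> A" for a
      proof (intro CollectI allI)
        fix s
        obtain l t where lt: "l \<in> L" "s = l + t * (b * r)" using mli_gen[OF L b(2)] by blast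
        have "a * s = a * l + (a * t * b) * r" using lt(2) by (simp add: algebra_simps)
        moreover have "a * l \<in> L" using lt(1) liD(4)[OF lL] by blast
        moreover have "a * t \<in> A" using a AB tsD(5) by blast
        then have "(a * t) * b \<in> ?P" using AB b(1) by blast
        then have "(a * t * b) * r \<in> L" by blast
        ultimately show "a * s \<in> L" using liD(2)[OF lL] by metis
      qed
      then show ?thesis by blast
    qed simp
  qed
qed

lemma hilbert_jac:
  fixes x :: "'a::ring_1"
  assumes H: "hilbert_ring TYPE('a)" and x: "\<forall>M. maximal_ideal M \<longrightarrow> x \<in> M"
  shows "x \<in> jacobson"
  unfolding jacobson_def
proof
  fix L :: "'a set" assume "L \<in> {M. maximal_left_ideal M}"
  then have L: "maximal_left_ideal L" by simp
  have "prime_ideal {y. \<forall>s. y * s \<in> L}" using core_prime[OF L] .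
  then obtain MM where MM: "\<forall>M\<in>MM. maximal_ideal M" "{y. \<forall>s. y * s \<in> L} = \<Inter>MM"
    using H unfolding hilbert_ring_def by blast
  have "x \<in> \<Inter>MM" using MM(1) x by blast
  then have "x * 1 \<in> L" using MM(2) by blast
  then show "x \<in> L" by simp
qed

lemma full_iff: "full (u::'a::ring_1) \<longleftrightarrow> (\<forall>M. maximal_ideal M \<longrightarrow> u \<notin> M)"
proof
  assume "full u"
  then show "\<forall>M. maximal_ideal M \<longrightarrow> u \<notin> M"
  proof (intro allI impI)
    fix M :: "'a set" assume M: "maximal_ideal M"
    show "u \<notin> M"
    proof
      assume "u \<in> M"
      then have "ideal_gen {u} \<subseteq> M" using ideal_gen_le max_ts[OF M] by blast
      then show False using \<open>full u\<close> M unfolding full_def maximal_ideal_def by blast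
    qed
  qed
next
  assume H: "\<forall>M. maximal_ideal M \<longrightarrow> u \<notin> M"
  show "full u"
  proof (rule ccontr)
    assume "\<not> full u"
    then have "1 \<notin> ideal_gen {u}" unfolding full_def using ts_one ts_ideal_gen by blast
    then obtain M where "maximal_ideal M" "ideal_gen {u} \<subseteq> M" using exists_maximal ts_ideal_gen by blast
    then show False using H ideal_gen_sub by blast
  qed
qed
lemma MaxSpec_iff: "M \<in> MaxSpec \<longleftrightarrow> maximal_ideal M"
  by (simp add: MaxSpec_def)

lemma V_sub: "V I \<subseteq> MaxSpec"
  by (auto simp: V_def)

lemma V_Int:
  fixes I K :: "'a::ring_1 set"
  assumes I: "two_sided_ideal I" and K: "two_sided_ideal K"
  shows "V I \<union> V K = V (I \<inter> K)"
proof
  show "V I \<union> V K \<subseteq> V (I \<inter> K)" by (auto simp: V_def)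
next
  show "V (I \<inter> K) \<subseteq> V I \<union> V K"
  proof
    fix M assume M: "M \<in> V (I \<inter> K)"
    then have mM: "maximal_ideal M" and sub: "I \<inter> K \<subseteq> M" by (auto simp: V_def MaxSpec_def)
    show "M \<in> V I \<union> V K"
    proof (rule ccontr)
      assume "M \<notin> V I \<union> V K"
      then obtain i k where ik: "i \<in> I" "i \<notin> M" "k \<in> K" "k \<notin> M" using mM by (auto simp: V_def MaxSpec_def)
      have "\<forall>r. i * r * k \<in> M"
      proof
        fix r
        have "i * r * k \<in> I" using tsD(5)[OF I] ik(1) by blast
        moreover have "i * r * k \<in> K" using tsD(4)[OF K] ik(3) by (metis mult.assoc)
        ultimately show "i * r * k \<in> M" using sub by blast
      qed
      then show False using max_prime[OF mM ik(2)] ik(4) by blast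
    qed
  qed
qed

lemma ts_Int: "two_sided_ideal (I::'a::ring_1 set) \<Longrightarrow> two_sided_ideal K \<Longrightarrow> two_sided_ideal (I \<inter> K)"
  by (rule tsI) (auto intro: tsD)

definition opn :: "'a::ring_1 set set \<Rightarrow> bool" where
  "opn U \<longleftrightarrow> (\<exists>I. two_sided_ideal I \<and> U = MaxSpec - V I)"

lemma istop_opn: "istopology (opn :: 'a::ring_1 set set \<Rightarrow> bool)"
  unfolding istopology_def
proof (intro conjI allI impI)
  fix S T :: "'a set set" assume "opn S" "opn T"
  then obtain I K where IK: "two_sided_ideal I" "S = MaxSpec - V I" "two_sided_ideal K" "T = MaxSpec - V K"
    unfolding opn_def by blast
  have "S \<inter> T = MaxSpec - (V I \<union> V K)" using IK(2,4) by blast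
  also have "\<dots> = MaxSpec - V (I \<inter> K)" using V_Int[OF IK(1,3)] by simp
  finally have e: "S \<inter> T = MaxSpec - V (I \<inter> K)" .
  have "two_sided_ideal (I \<inter> K)" using IK(1,3) by (rule ts_Int)
  then show "opn (S \<inter> T)" unfolding opn_def using e by blast
next
  fix KK :: "'a set set set" assume H: "\<forall>K\<in>KK. opn K"
  define F where "F = {J::'a set. two_sided_ideal J \<and> MaxSpec - V J \<in> KK}"
  define I where "I = ideal_gen (\<Union>F)"
  have "\<Union>KK = MaxSpec - V I"
  proof
    show "\<Union>KK \<subseteq> MaxSpec - V I"
    proof
      fix M assume "M \<in> \<Union>KK"
      then obtain S where S: "S \<in> KK" "M \<in> S" by blast
      from H S(1) have "opn S" by blast
      then obtain J where J: "two_sided_ideal J" "S = MaxSpec - V J" unfolding opn_def by blast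
      have JF: "J \<in> F" unfolding F_def using J(1) S(1) J(2) by simp
      have "M \<in> MaxSpec - V J" using S(2) J(2) by simp
      then have MJ: "\<not> J \<subseteq> M" "M \<in> MaxSpec" unfolding V_def by auto
      have "J \<subseteq> \<Union>F" using JF by blast
      then have "J \<subseteq> I" using ideal_gen_sub[of "\<Union>F"] unfolding I_def by (rule subset_trans)
      then have "\<not> I \<subseteq> M" using MJ(1) by blast
      then show "M \<in> MaxSpec - V I" using MJ(2) unfolding V_def by blast
    qed
  next
    show "MaxSpec - V I \<subseteq> \<Union>KK"
    proof
      fix M assume M: "M \<in> MaxSpec - V I"
      then have mM: "maximal_ideal M" and nsub: "\<not> I \<subseteq> M" unfolding V_def MaxSpec_def by auto
      then have "\<not> \<Union>F \<subseteq> M" using ideal_gen_le max_ts unfolding I_def by blast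
      then obtain J where J: "J \<in> F" "\<not> J \<subseteq> M" by blast
      then have "M \<in> MaxSpec - V J" using M unfolding V_def by blast
      moreover have "MaxSpec - V J \<in> KK" using J(1) unfolding F_def by blast
      ultimately show "M \<in> \<Union>KK" by blast
    qed
  qed
  moreover have "two_sided_ideal I" unfolding I_def by (rule ts_ideal_gen)
  ultimately show "opn (\<Union>KK)" unfolding opn_def by blast
qed
lemma openin_max: "openin (max_topology TYPE('a::ring_1)) U \<longleftrightarrow> (\<exists>I::'a set. two_sided_ideal I \<and> U = MaxSpec - V I)"
  unfolding max_topology_def using istop_opn[where 'a='a] by (simp add: opn_def[abs_def])

lemma topspace_max: "topspace (max_topology TYPE('a::ring_1)) = (MaxSpec :: 'a set set)"
proof
  show "topspace (max_topology TYPE('a)) \<subseteq> MaxSpec"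
    unfolding topspace_def openin_max by blast
next
  have "V (UNIV::'a set) = {}" by (auto simp: V_def MaxSpec_def maximal_ideal_def)
  then have "openin (max_topology TYPE('a)) (MaxSpec :: 'a set set)"
    unfolding openin_max using ts_UNIV by (metis Diff_empty)
  then show "MaxSpec \<subseteq> topspace (max_topology TYPE('a))" by (rule openin_subset)
qed

lemma closedin_max: "closedin (max_topology TYPE('a::ring_1)) A \<longleftrightarrow> (\<exists>I::'a set. two_sided_ideal I \<and> A = V I)"
proof
  assume "closedin (max_topology TYPE('a)) A"
  then have "A \<subseteq> MaxSpec" "openin (max_topology TYPE('a)) (MaxSpec - A)"
    unfolding closedin_def topspace_max by auto
  then obtain I :: "'a set" where "two_sided_ideal I" "MaxSpec - A = MaxSpec - V I" unfolding openin_max by blast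
  then show "\<exists>I::'a set. two_sided_ideal I \<and> A = V I" using \<open>A \<subseteq> MaxSpec\<close> V_sub by blast
next
  assume "\<exists>I::'a set. two_sided_ideal I \<and> A = V I"
  then obtain I :: "'a set" where "two_sided_ideal I" "A = V I" by blast
  then show "closedin (max_topology TYPE('a)) A"
    unfolding closedin_def topspace_max openin_max using V_sub by blast
qed

lemma coprime_ideals:
  fixes I K :: "'a::ring_1 set"
  assumes I: "two_sided_ideal I" and K: "two_sided_ideal K" and d: "V I \<inter> V K = {}"
  shows "\<exists>i\<in>I. \<exists>k\<in>K. i + k = 1"
proof (rule ccontr)
  assume n: "\<not> ?thesis"
  let ?S = "{i + k | i k. i \<in> I \<and> k \<in> K}"
  have tS: "two_sided_ideal ?S"
  proof (rule tsI)
    show "0 \<in> ?S" using tsD(1)[OF I] tsD(1)[OF K] by force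
  next
    fix a b assume "a \<in> ?S" "b \<in> ?S"
    then obtain i1 k1 i2 k2 where "a = i1 + k1" "b = i2 + k2" "i1 \<in> I" "i2 \<in> I" "k1 \<in> K" "k2 \<in> K" by blast
    then have "a + b = (i1 + i2) + (k1 + k2)" "i1 + i2 \<in> I" "k1 + k2 \<in> K" using tsD(2)[OF I] tsD(2)[OF K]
      by (auto simp: algebra_simps)
    then show "a + b \<in> ?S" by blast
  next
    fix a assume "a \<in> ?S"
    then obtain i1 k1 where "a = i1 + k1" "i1 \<in> I" "k1 \<in> K" by blast
    then have "- a = (- i1) + (- k1)" "- i1 \<in> I" "- k1 \<in> K" using tsD(3)[OF I] tsD(3)[OF K] by auto
    then show "- a \<in> ?S" by blast
  next
    fix a r assume "a \<in> ?S"
    then obtain i1 k1 where "a = i1 + k1" "i1 \<in> I" "k1 \<in> K" by blast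
    then have "r * a = (r * i1) + (r * k1)" "r * i1 \<in> I" "r * k1 \<in> K" using tsD(4)[OF I] tsD(4)[OF K]
      by (auto simp: algebra_simps)
    then show "r * a \<in> ?S" by blast
  next
    fix a r assume "a \<in> ?S"
    then obtain i1 k1 where "a = i1 + k1" "i1 \<in> I" "k1 \<in> K" by blast
    then have "a * r = (i1 * r) + (k1 * r)" "i1 * r \<in> I" "k1 * r \<in> K" using tsD(5)[OF I] tsD(5)[OF K]
      by (auto simp: algebra_simps)
    then show "a * r \<in> ?S" by blast
  qed
  have "1 \<notin> ?S"
  proof
    assume "1 \<in> ?S" then obtain i k where "1 = i + k" "i \<in> I" "k \<in> K" by blast
    then show False using n by metis
  qed
  then obtain M where M: "maximal_ideal M" "?S \<subseteq> M" using exists_maximal tS by blast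
  have "I \<subseteq> ?S"
  proof
    fix i assume "i \<in> I" then have "i = i + 0 \<and> i \<in> I \<and> 0 \<in> K" using tsD(1)[OF K] by simp
    then show "i \<in> ?S" by blast
  qed
  moreover have "K \<subseteq> ?S"
  proof
    fix k assume "k \<in> K" then have "k = 0 + k \<and> 0 \<in> I \<and> k \<in> K" using tsD(1)[OF I] by simp
    then show "k \<in> ?S" by blast
  qed
  ultimately have "M \<in> V I \<inter> V K" using M by (auto simp: V_def MaxSpec_def)
  then show False using d by blast
qed

lemma Z_eq: "{M \<in> MaxSpec. (x::'a::ring_1) \<in> M} = V (ideal_gen {x})"
  unfolding V_def MaxSpec_def using ideal_gen_le_iff max_ts by fastforce

lemma Z_closed: "closedin (max_topology TYPE('a::ring_1)) {M \<in> MaxSpec. (x::'a) \<in> M}"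
  unfolding closedin_max Z_eq using ts_ideal_gen by blast

lemma Z_open: "openin (max_topology TYPE('a::ring_1)) {M \<in> MaxSpec. (x::'a) \<notin> M}"
proof -
  have "{M \<in> MaxSpec. (x::'a) \<notin> M} = MaxSpec - {M \<in> MaxSpec. x \<in> M}" by blast
  then show ?thesis unfolding openin_max Z_eq using ts_ideal_gen by blast
qed
lemma max_idem_split:
  fixes M :: "'a::ring_1 set"
  assumes M: "maximal_ideal M" and e: "\<forall>r. e * r * (1 - e) \<in> jacobson"
  shows "(e \<in> M) \<noteq> (1 - e \<in> M)"
proof -
  have "\<forall>r. e * r * (1 - e) \<in> M" using e jacobson_sub_max[OF M] by blast
  then have 1: "e \<notin> M \<Longrightarrow> 1 - e \<in> M" using max_prime[OF M] by blast
  have 2: "\<not> (e \<in> M \<and> 1 - e \<in> M)"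
  proof
    assume "e \<in> M \<and> 1 - e \<in> M"
    then have "e + (1 - e) \<in> M" using tsD(2)[OF max_ts[OF M]] by blast
    then show False using max_one[OF M] by simp
  qed
  show ?thesis using 1 2 by blast
qed

theorem corollary3p4:
  assumes "hilbert_ring TYPE('a::ring_1)"
  shows "feckly_clean TYPE('a) \<longleftrightarrow> strongly_zero_dimensional (max_topology TYPE('a))"
proof
  assume fc: "feckly_clean TYPE('a)"
  show "strongly_zero_dimensional (max_topology TYPE('a))"
    unfolding strongly_zero_dimensional_def
  proof (intro allI impI)
    fix A B :: "'a set set"
    assume H: "closedin (max_topology TYPE('a)) A \<and> closedin (max_topology TYPE('a)) B \<and> A \<inter> B = {}"
    then obtain I K :: "'a set" where IK: "two_sided_ideal I" "A = V I" "two_sided_ideal K" "B = V K"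
      unfolding closedin_max by blast
    then have "V I \<inter> V K = {}" using H by simp
    then obtain i k where ik: "i \<in> I" "k \<in> K" "i + k = 1" using coprime_ideals[OF IK(1,3)] by blast
    have "feckly_clean_elem i" using fc unfolding feckly_clean_def by blast
    then obtain e u where eu: "i = e + u" "full u" "\<forall>r. e * r * (1 - e) \<in> jacobson"
      unfolding feckly_clean_elem_def by blast
    have uM: "\<And>M. maximal_ideal M \<Longrightarrow> u \<notin> M" using eu(2) full_iff by blast
    define C1 where "C1 = {M \<in> MaxSpec. (1 - e) \<in> M}"
    define C2 where "C2 = {M \<in> MaxSpec. e \<in> M}"
    have C1': "C1 = {M \<in> MaxSpec. e \<notin> M}"
    proof (rule set_eqI)
      fix M show "M \<in> C1 \<longleftrightarrow> M \<in> {M \<in> MaxSpec. e \<notin> M}"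
      proof (cases "M \<in> MaxSpec")
        case True
        then have "(e \<in> M) \<noteq> (1 - e \<in> M)" using max_idem_split[OF _ eu(3)] MaxSpec_iff by blast
        then show ?thesis unfolding C1_def using True by blast
      next
        case False then show ?thesis unfolding C1_def by blast
      qed
    qed
    have C2': "C2 = {M \<in> MaxSpec. (1 - e) \<notin> M}"
    proof (rule set_eqI)
      fix M show "M \<in> C2 \<longleftrightarrow> M \<in> {M \<in> MaxSpec. (1 - e) \<notin> M}"
      proof (cases "M \<in> MaxSpec")
        case True
        then have "(e \<in> M) \<noteq> (1 - e \<in> M)" using max_idem_split[OF _ eu(3)] MaxSpec_iff by blast
        then show ?thesis unfolding C2_def using True by blast
      next
        case False then show ?thesis unfolding C2_def by blast
      qed
    qed
    have "closedin (max_topology TYPE('a)) C1" unfolding C1_def by (rule Z_closed)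
    moreover have "openin (max_topology TYPE('a)) C1" unfolding C1' by (rule Z_open)
    moreover have "closedin (max_topology TYPE('a)) C2" unfolding C2_def by (rule Z_closed)
    moreover have "openin (max_topology TYPE('a)) C2" unfolding C2' by (rule Z_open)
    moreover have "C1 \<inter> C2 = {}" unfolding C1_def C2' by blast
    moreover have "A \<subseteq> C1"
    proof
      fix M assume "M \<in> A"
      then have M: "maximal_ideal M" "i \<in> M" using IK(2) ik(1) unfolding V_def MaxSpec_def by auto
      have "e \<notin> M"
      proof
        assume "e \<in> M"
        then have "i - e \<in> M" using ts_diff[OF max_ts[OF M(1)]] M(2) by blast
        then show False using uM[OF M(1)] eu(1) by simp
      qed
      then show "M \<in> C1" unfolding C1' using M(1) MaxSpec_iff by blast
    qed
    moreover have "B \<subseteq> C2"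
    proof
      fix M assume "M \<in> B"
      then have M: "maximal_ideal M" "k \<in> M" using IK(4) ik(2) unfolding V_def MaxSpec_def by auto
      have "1 - e \<notin> M"
      proof
        assume "1 - e \<in> M"
        then have "(1 - e) - k \<in> M" using ts_diff[OF max_ts[OF M(1)]] M(2) by blast
        moreover have "(1 - e) - k = u" using ik(3) eu(1) by (simp add: algebra_simps)
        ultimately show False using uM[OF M(1)] by simp
      qed
      then show "M \<in> C2" unfolding C2' using M(1) MaxSpec_iff by blast
    qed
    ultimately show "\<exists>C1 C2. closedin (max_topology TYPE('a)) C1 \<and> openin (max_topology TYPE('a)) C1 \<and>
        closedin (max_topology TYPE('a)) C2 \<and> openin (max_topology TYPE('a)) C2 \<and>
        C1 \<inter> C2 = {} \<and> A \<subseteq> C1 \<and> B \<subseteq> C2" by blast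
  qed
next
  assume sz: "strongly_zero_dimensional (max_topology TYPE('a))"
  show "feckly_clean TYPE('a)"
    unfolding feckly_clean_def
  proof
    fix a :: 'a
    define A where "A = {M \<in> MaxSpec. a \<in> M}"
    define B where "B = {M \<in> MaxSpec. (1 - a) \<in> M}"
    have AB: "A \<inter> B = {}"
    proof (rule ccontr)
      assume "A \<inter> B \<noteq> {}"
      then obtain M where M: "maximal_ideal M" "a \<in> M" "1 - a \<in> M" unfolding A_def B_def MaxSpec_iff by blast
      then have "a + (1 - a) \<in> M" using tsD(2)[OF max_ts[OF M(1)]] by blast
      then show False using max_one[OF M(1)] by simp
    qed
    have cA: "closedin (max_topology TYPE('a)) A" unfolding A_def by (rule Z_closed)
    have cB: "closedin (max_topology TYPE('a)) B" unfolding B_def by (rule Z_closed)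
    obtain C1 C2 where C: "closedin (max_topology TYPE('a)) C1" "openin (max_topology TYPE('a)) C1"
      "C1 \<inter> C2 = {}" "A \<subseteq> C1" "B \<subseteq> C2"
      using sz[unfolded strongly_zero_dimensional_def, rule_format, of A B] cA cB AB by blast
    obtain I :: "'a set" where I: "two_sided_ideal I" "C1 = V I" using C(1) unfolding closedin_max by blast
    obtain K :: "'a set" where K: "two_sided_ideal K" "C1 = MaxSpec - V K" using C(2) unfolding openin_max by blast
    have VIK: "V I \<inter> V K = {}" using I(2) K(2) by blast
    have VIK2: "\<And>M. maximal_ideal M \<Longrightarrow> I \<subseteq> M \<or> K \<subseteq> M"
    proof -
      fix M :: "'a set" assume M: "maximal_ideal M"
      show "I \<subseteq> M \<or> K \<subseteq> M"
      proof (cases "M \<in> C1")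
        case True then show ?thesis using I(2) unfolding V_def by blast
      next
        case False then have "M \<in> V K" using K(2) M MaxSpec_iff by blast
        then show ?thesis unfolding V_def by blast
      qed
    qed
    obtain i k where ik: "i \<in> I" "k \<in> K" "i + k = 1" using coprime_ideals[OF I(1) K(1) VIK] by blast
    have "full (a - k)"
      unfolding full_iff
    proof (intro allI impI)
      fix M :: "'a set" assume M: "maximal_ideal M"
      have tM: "two_sided_ideal M" using max_ts[OF M] .
      show "a - k \<notin> M"
      proof
        assume u: "a - k \<in> M"
        show False
        proof (cases "I \<subseteq> M")
          case True
          then have "i \<in> M" using ik(1) by blast
          then have "(a - k) - i \<in> M" using u ts_diff[OF tM] by blast
          moreover have "(a - k) - i = - (1 - a)" using ik(3) by (metis add.commute diff_diff_eq minus_diff_eq diff_add_eq_diff_diff_swap)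
          ultimately have "- (- (1 - a)) \<in> M" using tsD(3)[OF tM] by metis
          then have "M \<in> B" using M unfolding B_def by (simp add: MaxSpec_def)
          moreover have "M \<in> C1" using True M MaxSpec_iff I(2) unfolding V_def by blast
          ultimately show False using C(3) C(5) by blast
        next
          case False
          then have "K \<subseteq> M" using VIK2[OF M] by blast
          then have "k \<in> M" using ik(2) by blast
          then have "(a - k) + k \<in> M" using u tsD(2)[OF tM] by blast
          then have "M \<in> A" using M unfolding A_def by (simp add: MaxSpec_def)
          then have "M \<in> C1" using C(4) by blast
          then show False using False I(2) unfolding V_def by blast
        qed
      qed
    qed
    moreover have "\<forall>r. k * r * (1 - k) \<in> jacobson"
    proof
      fix r
      have "1 - k = i" using ik(3) by (simp add: algebra_simps)
      have "\<forall>M. maximal_ideal M \<longrightarrow> k * r * (1 - k) \<in> M"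
      proof (intro allI impI)
        fix M :: "'a set" assume M: "maximal_ideal M"
        have tM: "two_sided_ideal M" using max_ts[OF M] .
        show "k * r * (1 - k) \<in> M"
        proof (cases "I \<subseteq> M")
          case True then show ?thesis using \<open>1 - k = i\<close> ik(1) tsD(4)[OF tM] by auto
        next
          case False then have "k \<in> M" using VIK2[OF M] ik(2) by blast
          then show ?thesis using tsD(5)[OF tM] by blast
        qed
      qed
      then show "k * r * (1 - k) \<in> jacobson" using hilbert_jac[OF assms] by blast
    qed
    moreover have "a = k + (a - k)" by simp
    ultimately show "feckly_clean_elem a" unfolding feckly_clean_elem_def by blast
  qed
qed

end
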